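(* Let $\|\cdot\|$ be a norm on $\mathbb{R}^d$ and let $Q$ be a collection of finite subsets of $\mathbb{R}^d$, each with at least $2$ elements. Let $E_0=\{e\subseteq\mathbb{R}^d\mid e \text{ is congruent to some } f\in Q\}$. For each $t\in\mathbb{Z}^+$ let $B_t=\{f\cup T\mid f\in Q,\ T\subseteq\mathbb{R}^d,\ f\cap T=\emptyset,\ |T|=t\}$ and $E_t=\{e\subseteq\mathbb{R}^d\mid e \text{ is congruent to some } g\in B_t\}$. Let $\mathcal{H}_0=(\mathbb{R}^d,E_0)$ and $\mathcal{H}_t=(\mathbb{R}^d,E_t)$. If $\chi(\mathcal{H}_0)<\infty$, then $\chi(\mathcal{H}_t)=\chi(\mathcal{H}_0)$ for every $t\in\mathbb{Z}^+$.
   Context: Congruence is in $(\mathbb{R}^d,\|\cdot\|)$: two sets are congruent iff one is the image of the other under a composition, in either order, of a surjective linear isometry of $(\mathbb{R}^d,\|\cdot\|)$ and a translation. A hypergraph $(V,E)$ has edges that are subsets of $V$ of size at least $2$; a proper coloring makes no edge monochromatic; $\chi$ is the least number of colors of a proper coloring. $\mathbb{Z}^+$ denotes the positive integers. *)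

theory Defs
  imports "HOL-Analysis.Analysis" "HOL-Library.Extended_Nat"
begin

definition is_norm :: "('a::real_vector \<Rightarrow> real) \<Rightarrow> bool" where
  "is_norm N \<longleftrightarrow> (\<forall>x. N x \<ge> 0) \<and> (\<forall>x. N x = 0 \<longleftrightarrow> x = 0) \<and>
     (\<forall>c x. N (c *\<^sub>R x) = \<bar>c\<bar> * N x) \<and> (\<forall>x y. N (x + y) \<le> N x + N y)"

definition lin_isometry :: "('a::real_vector \<Rightarrow> real) \<Rightarrow> ('a \<Rightarrow> 'a) \<Rightarrow> bool" where
  "lin_isometry N L \<longleftrightarrow> linear L \<and> surj L \<and> (\<forall>x. N (L x) = N x)"

definition congruent_N :: "('a::real_vector \<Rightarrow> real) \<Rightarrow> 'a set \<Rightarrow> 'a set \<Rightarrow> bool" where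
  "congruent_N N A B \<longleftrightarrow> (\<exists>L a. lin_isometry N L \<and>
      (A = (\<lambda>x. L x + a) ` B \<or> A = (\<lambda>x. L (x + a)) ` B))"

definition proper_coloring :: "'a set \<Rightarrow> 'a set set \<Rightarrow> nat \<Rightarrow> ('a \<Rightarrow> nat) \<Rightarrow> bool" where
  "proper_coloring V E k c \<longleftrightarrow> c ` V \<subseteq> {..<k} \<and>
      (\<forall>e\<in>E. \<not> (\<exists>col. \<forall>x\<in>e. c x = col))"

text \<open>Chromatic number, with value \<infinity> if no finite proper colouring exists.\<close>
definition chromatic_number :: "'a set \<Rightarrow> 'a set set \<Rightarrow> enat" where
  "chromatic_number V E = Inf {enat k | k. \<exists>c. proper_coloring V E k c}"

end

theory Submission
  imports Defs
begin

lemma compact_seq: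
  fixes s :: "nat \<Rightarrow> 'a \<Rightarrow> nat"
  assumes sk: "\<And>n x. s n x < k"
  shows "\<exists>g. (\<forall>x. g x < k) \<and> (\<forall>e. finite e \<longrightarrow> (\<forall>N. \<exists>n\<ge>N. \<forall>x\<in>e. g x = s n x))"
proof -
  define X where "X = product_topology (\<lambda>_::'a. discrete_topology {..<k}) UNIV"
  have top: "topspace X = {h. \<forall>x. h x < k}"
    unfolding X_def by (auto simp: PiE_def extensional_def)
  have cX: "compact_space X"
    unfolding X_def by (simp add: compact_space_product_topology compact_space_discrete_topology)
  define C where "C = (\<lambda>N. X closure_of (s ` {N..}))"
  have "(\<Inter>n. C n) \<noteq> {}"
  proof (rule compact_space_imp_nest[OF cX])
    show "closedin X (C n)" for n unfolding C_def by simp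
    show "C n \<noteq> {}" for n
    proof -
      have "s n \<in> topspace X" using sk top by auto
      moreover have "s n \<in> s ` {n..}" by auto
      ultimately have "s n \<in> C n" unfolding C_def
        by (meson closure_of_subset_Int IntI subsetD)
      then show ?thesis by auto
    qed
    show "decseq C" unfolding decseq_def C_def
      by (intro allI impI closure_of_mono) auto
  qed
  then obtain g where g: "\<And>n. g \<in> C n" by blast
  have gt: "g \<in> topspace X" using g[of 0] unfolding C_def in_closure_of by blast
  have "\<exists>n\<ge>N. \<forall>x\<in>e. g x = s n x" if fe: "finite e" for e N
  proof -
    define T where "T = PiE UNIV (\<lambda>x. if x \<in> e then {g x} else {..<k})"
    have "openin X T"
      unfolding X_def T_def openin_PiE_gen
      using fe gt top by (auto intro: finite_subset[OF _ fe] split: if_splits)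
    moreover have "g \<in> T" unfolding T_def using gt top by auto
    ultimately obtain y where "y \<in> s ` {N..}" "y \<in> T"
      using g[of N] unfolding C_def in_closure_of by blast
    then obtain n where "n \<ge> N" "s n \<in> T" by auto
    then have "\<forall>x\<in>e. g x = s n x" unfolding T_def PiE_iff by (metis (no_types, lifting) UNIV_I singletonD)
    then show "\<exists>n\<ge>N. \<forall>x\<in>e. g x = s n x" using \<open>n \<ge> N\<close> by blast
  qed
  moreover have "g x < k" for x using gt top by auto
  ultimately show ?thesis by blast
qed

lemma lin_iso_bij:
  fixes L :: "real ^ 'd \<Rightarrow> real ^ 'd"
  assumes "lin_isometry N L" shows "bij L"
proof -
  have "linear L" "surj L" using assms unfolding lin_isometry_def by auto
  then have "inj L" using linear_surjective_imp_injective by blast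
  then show ?thesis using \<open>surj L\<close> by (simp add: bij_def)
qed

lemma cong_normal:
  fixes N :: "real ^ 'd \<Rightarrow> real"
  assumes "congruent_N N e f"
  shows "\<exists>L b. lin_isometry N L \<and> e = (\<lambda>x. L x + b) ` f"
proof -
  obtain L a where L: "lin_isometry N L" and
    h: "e = (\<lambda>x. L x + a) ` f \<or> e = (\<lambda>x. L (x + a)) ` f"
    using assms unfolding congruent_N_def by blast
  have lin: "linear L" using L unfolding lin_isometry_def by auto
  show ?thesis
  proof (cases "e = (\<lambda>x. L x + a) ` f")
    case True then show ?thesis using L by blast
  next
    case False
    then have "e = (\<lambda>x. L x + L a) ` f" using h linear_add[OF lin] by simp
    then show ?thesis using L by blast
  qed
qed

lemma cong_intro:
  assumes "lin_isometry N L" shows "congruent_N N ((\<lambda>x. L x + b) ` f) f"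
  using assms unfolding congruent_N_def by blast

lemma dirA:
  fixes N :: "real ^ 'd \<Rightarrow> real"
  assumes "proper_coloring UNIV {e. \<exists>f\<in>Q. congruent_N N e f} k c"
  shows "proper_coloring UNIV
             {e. \<exists>g\<in>{f \<union> T | f T. f \<in> Q \<and> f \<inter> T = {} \<and> finite T \<and> card T = t}.
                   congruent_N N e g} k c"
  unfolding proper_coloring_def
proof (intro conjI ballI notI)
  show "c ` UNIV \<subseteq> {..<k}" using assms unfolding proper_coloring_def by auto
  fix e assume "e \<in> {e. \<exists>g\<in>{f \<union> T | f T. f \<in> Q \<and> f \<inter> T = {} \<and> finite T \<and> card T = t}.
                   congruent_N N e g}"
  then obtain f T where fQ: "f \<in> Q" and ce: "congruent_N N e (f \<union> T)" by blast
  then obtain L b where L: "lin_isometry N L" and e: "e = (\<lambda>x. L x + b) ` (f \<union> T)"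
    using cong_normal by blast
  have "(\<lambda>x. L x + b) ` f \<in> {e. \<exists>f\<in>Q. congruent_N N e f}"
    using fQ cong_intro[OF L] by blast
  moreover assume "\<exists>col. \<forall>x\<in>e. c x = col"
  then obtain col where "\<forall>x\<in>e. c x = col" by blast
  then have "\<forall>x\<in>(\<lambda>x. L x + b) ` f. c x = col" using e by auto
  ultimately show False using assms unfolding proper_coloring_def by blast
qed

lemma B1:
  fixes N :: "real ^ 'd \<Rightarrow> real" and c :: "real ^ 'd \<Rightarrow> nat"
  assumes pc: "proper_coloring UNIV
             {e. \<exists>g\<in>{f \<union> T | f T. f \<in> Q \<and> f \<inter> T = {} \<and> finite T \<and> card T = t}.
                   congruent_N N e g} k c"
    and Q2: "\<forall>f\<in>Q. finite f \<and> card f \<ge> 2"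
    and fQ: "f \<in> Q" and L: "lin_isometry N L"
    and inf: "\<forall>x\<in>f. infinite {y. c y = c (L x + b)}"
  shows "\<not> (\<forall>x\<in>f. c (L x + b) = col)"
proof
  assume mono: "\<forall>x\<in>f. c (L x + b) = col"
  define \<phi> where "\<phi> = (\<lambda>x. L x + b)"
  have ff: "finite f" and "card f \<ge> 2" using Q2 fQ by auto
  then have "f \<noteq> {}" by auto
  then obtain x0 where x0: "x0 \<in> f" by blast
  define C where "C = {y. c y = col}"
  have infC: "infinite C" using inf mono x0 unfolding C_def by auto
  define e where "e = \<phi> ` f"
  have fe: "finite e" using ff unfolding e_def by simp
  have "infinite (C - e)" using infC fe by (simp add: Diff_infinite_finite)
  then obtain T' where T': "T' \<subseteq> C - e" "finite T'" "card T' = t"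
    using infinite_arbitrarily_large by blast
  have bL: "bij L" using lin_iso_bij[OF L] .
  have injp: "inj \<phi>" using bL unfolding \<phi>_def bij_def inj_def by auto
  have surjp: "surj \<phi>"
  proof -
    have "y = \<phi> (inv L (y - b))" for y
      using bL unfolding \<phi>_def by (simp add: bij_is_surj surj_f_inv_f)
    then show ?thesis by (metis surj_def)
  qed
  define T where "T = \<phi> -` T'"
  have cT: "card T = t" unfolding T_def using card_vimage_inj[OF injp] surjp T' by auto
  have fT: "finite T" unfolding T_def using finite_vimageI[OF T'(2) injp] .
  have dj: "f \<inter> T = {}" using T' unfolding T_def e_def by auto
  have img: "e \<union> T' = \<phi> ` (f \<union> T)"
    unfolding T_def e_def image_Un using surjp by (simp add: surj_image_vimage_eq)
  have "congruent_N N (e \<union> T') (f \<union> T)"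
    unfolding img \<phi>_def by (rule cong_intro[OF L])
  then have "e \<union> T' \<in> {e. \<exists>g\<in>{f \<union> T | f T. f \<in> Q \<and> f \<inter> T = {} \<and> finite T \<and> card T = t}.
                   congruent_N N e g}" using fQ dj fT cT by blast
  moreover have "\<forall>x\<in>e \<union> T'. c x = col" using mono T' unfolding e_def \<phi>_def C_def by auto
  ultimately show False using pc unfolding proper_coloring_def by blast
qed

lemma dirB:
  fixes N :: "real ^ 'd \<Rightarrow> real" and c :: "real ^ 'd \<Rightarrow> nat"
  assumes pc: "proper_coloring UNIV {e. \<exists>g\<in>{f \<union> T | f T. f \<in> Q \<and> f \<inter> T = {} \<and> finite T \<and> card T = t}.
                   congruent_N N e g} k c"
    and Q2: "\<forall>f\<in>Q. finite f \<and> card f \<ge> 2"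
  shows "\<exists>c'. proper_coloring UNIV {e. \<exists>f\<in>Q. congruent_N N e f} k c'"
proof -
  have ck: "c x < k" for x using pc unfolding proper_coloring_def by auto
  define F where "F = {x. finite {y. c y = c x}}"
  have "F \<subseteq> (\<Union>j\<in>{..<k}. (if finite {y. c y = j} then {y. c y = j} else {}))"
    unfolding F_def using ck by auto
  then have finF: "finite F" by (rule finite_subset) auto
  define v :: "real ^ 'd" where "v = axis undefined 1"
  have v0: "v \<noteq> 0" unfolding v_def by simp
  define s where "s = (\<lambda>(n::nat) x. c (x + real n *\<^sub>R v))"
  obtain g where gk: "\<forall>x. g x < k"
    and gs: "\<forall>e. finite e \<longrightarrow> (\<forall>N. \<exists>n\<ge>N. \<forall>x\<in>e. g x = s n x)"
    using compact_seq[of s k] ck unfolding s_def by blast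
  have "proper_coloring UNIV {e. \<exists>f\<in>Q. congruent_N N e f} k g"
    unfolding proper_coloring_def
  proof (intro conjI ballI notI)
    show "g ` UNIV \<subseteq> {..<k}" using gk by auto
    fix e assume "e \<in> {e. \<exists>f\<in>Q. congruent_N N e f}"
    then obtain f where fQ: "f \<in> Q" and "congruent_N N e f" by blast
    then obtain L b where L: "lin_isometry N L" and e: "e = (\<lambda>x. L x + b) ` f"
      using cong_normal by blast
    have fe: "finite e" using Q2 fQ e by simp
    assume "\<exists>col. \<forall>x\<in>e. g x = col"
    then obtain col where mono: "\<forall>x\<in>e. g x = col" by blast
    define B where "B = (\<Union>x\<in>e. (\<lambda>n::nat. x + real n *\<^sub>R v) -` F)"
    have "inj (\<lambda>n::nat. x + real n *\<^sub>R v)" for x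
      using v0 unfolding inj_def by simp
    then have "finite B" unfolding B_def using fe finF finite_vimageI by blast
    then obtain M where M: "\<forall>n\<in>B. n < M" using finite_nat_set_iff_bounded by blast
    obtain n where n: "n \<ge> M" "\<forall>x\<in>e. g x = s n x" using gs fe by blast
    have nB: "n \<notin> B" using M n by auto
    have "\<not> (\<forall>x\<in>f. c (L x + (b + real n *\<^sub>R v)) = col)"
    proof (rule B1[OF pc Q2 fQ L])
      show "\<forall>x\<in>f. infinite {y. c y = c (L x + (b + real n *\<^sub>R v))}"
      proof
        fix x assume "x \<in> f"
        then have "L x + b \<in> e" using e by auto
        then have "(L x + b) + real n *\<^sub>R v \<notin> F" using nB unfolding B_def by blast
        then show "infinite {y. c y = c (L x + (b + real n *\<^sub>R v))}"
          unfolding F_def by (simp add: add.assoc)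
      qed
    qed
    moreover have "\<forall>x\<in>f. c (L x + (b + real n *\<^sub>R v)) = col"
    proof
      fix x assume "x \<in> f"
      then have xe: "L x + b \<in> e" using e by auto
      then have "g (L x + b) = col" using mono by blast
      moreover have "g (L x + b) = s n (L x + b)" using n xe by blast
      ultimately show "c (L x + (b + real n *\<^sub>R v)) = col"
        unfolding s_def by (simp add: add.assoc)
    qed
    ultimately show False by blast
  qed
  then show ?thesis by blast
qed

theorem theorem4p4:
  fixes N :: "real ^ 'd \<Rightarrow> real"
    and Q :: "(real ^ 'd) set set"
  assumes "is_norm N"
    and "\<forall>f\<in>Q. finite f \<and> card f \<ge> 2"
    and "chromatic_number UNIV {e. \<exists>f\<in>Q. congruent_N N e f} < \<infinity>"
  shows "\<forall>t::nat. t \<ge> 1 \<longrightarrow>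
           chromatic_number UNIV
             {e. \<exists>g\<in>{f \<union> T | f T. f \<in> Q \<and> f \<inter> T = {} \<and> finite T \<and> card T = t}.
                   congruent_N N e g}
           = chromatic_number UNIV {e. \<exists>f\<in>Q. congruent_N N e f}"
proof (intro allI impI)
  fix t :: nat
  have eq: "(\<exists>c. proper_coloring UNIV {e. \<exists>g\<in>{f \<union> T | f T. f \<in> Q \<and> f \<inter> T = {} \<and> finite T \<and> card T = t}.
                   congruent_N N e g} k c) \<longleftrightarrow> (\<exists>c. proper_coloring UNIV {e. \<exists>f\<in>Q. congruent_N N e f} k c)" for k
    using dirB[OF _ assms(2)] dirA by blast
  then show "chromatic_number UNIV {e. \<exists>g\<in>{f \<union> T | f T. f \<in> Q \<and> f \<inter> T = {} \<and> finite T \<and> card T = t}.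
                   congruent_N N e g} = chromatic_number UNIV {e. \<exists>f\<in>Q. congruent_N N e f}"
    unfolding chromatic_number_def using eq by simp
qed

end
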